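(* For every $\varepsilon \in (0,1]$, $$\inf_{\mu} \sup_{j \geq 1} |\widehat\mu(j)| \;\geq\; \frac{\pi\varepsilon}{8 + 2\pi\varepsilon} \;\geq\; \frac{\varepsilon}{5},$$ where the infimum is over all Borel probability measures $\mu$ on $\mathbf{R}$ with $\mu([\varepsilon,1]) = 1$, and the supremum is over all positive integers $j$.
   Context: For a finite Borel measure $\mu$ on $\mathbf{R}$, its Fourier transform is $\widehat\mu(\xi) = \int e^{-2\pi i \xi x}\,d\mu(x)$ for $\xi \in \mathbf{R}$. *)

theory Defs
  imports "HOL-Probability.Probability"
begin

definition fourier_measure :: "real measure \<Rightarrow> real \<Rightarrow> complex" where
  "fourier_measure \<mu> \<xi> = integral\<^sup>L \<mu> (\<lambda>x. exp (- (2 * pi * \<i> * complex_of_real (\<xi> * x))))"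

end

theory Submission
  imports Defs
begin

lemma norm_one_minus_cis: "cmod (1 - cis (2*t)) = 2 * \<bar>sin t\<bar>"
proof -
  have "(cmod (1 - cis (2*t)))^2 = (1 - cos (2*t))^2 + (sin (2*t))^2"
    by (simp add: cmod_def)
  also have "\<dots> = (2 * \<bar>sin t\<bar>)^2"
  proof -
    have c: "cos (2*t) = 1 - 2*(sin t)^2" by (simp add: cos_double_sin)
    have s: "sin (2*t) = 2 * sin t * cos t" by (simp add: sin_double)
    have "(sin t)^2 + (cos t)^2 = 1" by simp
    then have "(1 - cos (2*t))^2 + (sin (2*t))^2 = 4 * (sin t)^2 * ((sin t)^2 + (cos t)^2)"
      unfolding c s power2_eq_square by algebra
    also have "\<dots> = 4 * (sin t)^2" using \<open>(sin t)^2 + (cos t)^2 = 1\<close>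
      by (simp only: mult_1_right)
    also have "\<dots> = (2 * \<bar>sin t\<bar>)^2" by (simp add: power_mult_distrib)
    finally show ?thesis .
  qed
  finally have "(cmod (1 - cis (2*t)))^2 = (2 * \<bar>sin t\<bar>)^2" .
  then show ?thesis
    by (metis abs_ge_zero norm_ge_zero power2_eq_iff_nonneg mult_nonneg_nonneg zero_le_numeral)
qed

lemma cis_sum_bound:
  fixes y :: real assumes "sin (pi*y) \<noteq> 0"
  shows "cmod (\<Sum>k<n. cis (2*pi*real k*y)) \<le> 1 / \<bar>sin (pi*y)\<bar>"
proof -
  define z where "z = cis (2*pi*y)"
  have eq: "cis (2*pi*real k*y) = z ^ k" for k
  proof -
    have "z ^ k = cis (real k * (2*pi*y))" unfolding z_def by (rule Complex.DeMoivre)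
    thus ?thesis by (simp add: mult_ac)
  qed
  have n1: "cmod (1 - z) = 2 * \<bar>sin (pi*y)\<bar>"
    using norm_one_minus_cis[of "pi*y"] by (simp add: z_def mult_ac)
  hence z1: "z \<noteq> 1" using assms by auto
  have "(\<Sum>k<n. cis (2*pi*real k*y)) = (1 - z^n) / (1 - z)"
    by (simp add: eq sum_gp_strict z1)
  moreover have "cmod (1 - z^n) \<le> 2"
  proof -
    have "cmod (1 - z^n) \<le> cmod 1 + cmod (z^n)" by (rule norm_triangle_ineq4)
    also have "\<dots> = 2" by (simp add: z_def norm_power)
    finally show ?thesis .
  qed
  ultimately have "cmod (\<Sum>k<n. cis (2*pi*real k*y)) \<le> 2 / (2 * \<bar>sin (pi*y)\<bar>)"
  proof -
    assume A: "(\<Sum>k<n. cis (2*pi*real k*y)) = (1 - z^n) / (1 - z)" "cmod (1 - z^n) \<le> 2"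
    have "cmod (\<Sum>k<n. cis (2*pi*real k*y)) = cmod (1 - z^n) / (2 * \<bar>sin (pi*y)\<bar>)"
      using A(1) by (simp add: norm_divide n1)
    also have "\<dots> \<le> 2 / (2 * \<bar>sin (pi*y)\<bar>)"
      by (rule divide_right_mono[OF A(2)]) simp
    finally show ?thesis .
  qed
  thus ?thesis by simp
qed

lemma sin_pi_lower:
  fixes m y :: real
  assumes "0 < m" "m \<le> 1/2" "m \<le> y" "y \<le> 1 - m"
  shows "sin (pi*m) \<le> sin (pi*y)"
proof (cases "y \<le> 1/2")
  case True
  have p: "0 < pi*m" using assms by simp
  have q: "pi*y \<le> pi*(1/2)" using True by (intro mult_left_mono) auto
  have h1: "- (pi/2) \<le> pi*m" using p pi_gt_zero by linarith
  have h2: "pi*m \<le> pi*y" using assms by (intro mult_left_mono) auto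
  have h3: "pi*y \<le> pi/2" using q by simp
  note h = h1 h2 h3
  have "- (pi/2) \<le> pi*y" using h by linarith
  then show ?thesis using sin_mono_le_eq h by (smt (verit, best))
next
  case False
  have "sin (pi*y) = sin (pi*(1-y))"
    by (metis sin_pi_minus right_diff_distrib mult.right_neutral)
  moreover have "sin (pi*m) \<le> sin (pi*(1-y))"
  proof -
    have p: "0 < pi*m" using assms by simp
    have q: "pi*(1-y) \<le> pi*(1/2)" using False by (intro mult_left_mono) auto
    have h1: "- (pi/2) \<le> pi*m" using p pi_gt_zero by linarith
    have h2: "pi*m \<le> pi*(1-y)" using assms by (intro mult_left_mono) auto
    have h3: "pi*(1-y) \<le> pi/2" using q by simp
    note h = h1 h2 h3
    have "- (pi/2) \<le> pi*(1-y)" using h by linarith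
    then show ?thesis using sin_mono_le_eq h by (smt (verit, best))
  qed
  ultimately show ?thesis by simp
qed

lemma sum_min_bound_aux:
  fixes s :: real and J :: nat
  assumes "J \<ge> 1"
  shows "(\<Sum>j\<in>{1..n}. min 1 (s^2 / (real j)^2)) \<le>
           (if n \<le> J then real n else real J + s^2 * (1 / real J - 1 / real n))"
proof (induction n)
  case 0
  then show ?case by simp
next
  case (Suc n)
  let ?f = "\<lambda>j::nat. min 1 (s^2 / (real j)^2)"
  have split: "(\<Sum>j\<in>{1..Suc n}. ?f j) = (\<Sum>j\<in>{1..n}. ?f j) + ?f (Suc n)"
    by simp
  show ?case
  proof (cases "Suc n \<le> J")
    case True
    then show ?thesis using Suc.IH split by (simp add: min_le_iff_disj)
  next
    case False
    have fle: "?f (Suc n) \<le> s^2 / (real (Suc n))^2" by simp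
    have key: "s^2 / (real (Suc n))^2 \<le> s^2 * (1 / real n - 1 / real (Suc n))" if "n \<ge> 1"
    proof -
      have e: "1 / real n - 1 / real (Suc n) = 1 / (real n * real (Suc n))"
        using that by (simp add: field_simps)
      have "1 / (real (Suc n))^2 \<le> 1 / (real n * real (Suc n))"
        by (rule divide_left_mono) (use that in \<open>auto simp: power2_eq_square\<close>)
      hence "1 / (real (Suc n))^2 \<le> 1 / real n - 1 / real (Suc n)" using e by simp
      then show ?thesis
        by (metis mult_left_mono times_divide_eq_right mult.right_neutral zero_le_power2)
    qed
    show ?thesis
    proof (cases "n \<le> J")
      case True
      with False have nJ: "n = J" by simp
      have "(\<Sum>j\<in>{1..Suc n}. ?f j) \<le> real J + s^2 * (1 / real n - 1 / real (Suc n))"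
        using Suc.IH split True fle key[of] nJ assms by simp
      then show ?thesis using False nJ by simp
    next
      case False2: False
      have "(\<Sum>j\<in>{1..Suc n}. ?f j) \<le> real J + s^2 * (1 / real J - 1 / real n)
               + s^2 * (1 / real n - 1 / real (Suc n))"
        using Suc.IH split False2 fle key assms by simp
      then show ?thesis using False by (simp add: algebra_simps)
    qed
  qed
qed

lemma sum_min_bound:
  fixes s :: real
  assumes "s > 0"
  shows "(\<Sum>j\<in>{1..n}. min 1 (s^2 / (real j)^2)) \<le> 2 * s + 1"
proof -
  define J where "J = nat \<lceil>s\<rceil>"
  have J1: "real J \<ge> s" "real J < s + 1" unfolding J_def using assms by linarith+
  hence J0: "J \<ge> 1" using assms by linarith
  have a: "(\<Sum>j\<in>{1..n}. min 1 (s^2 / (real j)^2)) \<le>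
           (if n \<le> J then real n else real J + s^2 * (1 / real J - 1 / real n))"
    by (rule sum_min_bound_aux[OF J0])
  have b: "s^2 / real J \<le> s"
    using J1 assms by (simp add: power2_eq_square field_simps mult_left_mono)
  show ?thesis
  proof (cases "n \<le> J")
    case True
    then show ?thesis using a J1 assms by simp
  next
    case False
    have "s^2 * (1 / real J - 1 / real n) \<le> s^2 / real J"
      by (simp add: algebra_simps)
    then show ?thesis using a False J1 b by simp
  qed
qed

lemma fourier_char: "fourier_measure M \<xi> = char M (- 2 * pi * \<xi>)"
  unfolding fourier_measure_def char_def
  by (intro Bochner_Integration.integral_cong refl) (simp add: algebra_simps)

lemma cis_iexp: "cis (2*pi*c*x) = iexp ((2*pi*c) * x)"
  by (simp add: cis_conv_exp)

lemma pair_sum: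
  fixes F :: "real \<Rightarrow> real"
  assumes F0: "\<And>x. x \<ge> 0 \<Longrightarrow> F x \<ge> 0" and kN: "k < N"
  shows "(\<Sum>l\<in>{..<N}-{k}. F ((real k - real l)^2)) \<le> 2 * (\<Sum>j\<in>{1..N}. F ((real j)^2))"
proof -
  have dec: "{..<N}-{k} = {..<k} \<union> {Suc k..<N}" using kN by auto
  have A: "(\<Sum>l\<in>{..<k}. F ((real k - real l)^2)) = (\<Sum>j\<in>{1..k}. F ((real j)^2))"
    by (rule sum.reindex_bij_witness[of _ "\<lambda>j. k-j" "\<lambda>l. k-l"]) (auto simp: of_nat_diff)
  have B: "(\<Sum>l\<in>{Suc k..<N}. F ((real k - real l)^2)) = (\<Sum>j\<in>{1..<N-k}. F ((real j)^2))"
    by (rule sum.reindex_bij_witness[of _ "\<lambda>j. j+k" "\<lambda>l. l-k"])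
       (auto simp: of_nat_diff power2_commute)
  have A': "(\<Sum>j\<in>{1..k}. F ((real j)^2)) \<le> (\<Sum>j\<in>{1..N}. F ((real j)^2))"
    by (rule sum_mono2) (use kN in \<open>auto intro!: F0\<close>)
  have B': "(\<Sum>j\<in>{1..<N-k}. F ((real j)^2)) \<le> (\<Sum>j\<in>{1..N}. F ((real j)^2))"
    by (rule sum_mono2) (use kN in \<open>auto intro!: F0\<close>)
  have "(\<Sum>l\<in>{..<N}-{k}. F ((real k - real l)^2)) =
        (\<Sum>l\<in>{..<k}. F ((real k - real l)^2)) + (\<Sum>l\<in>{Suc k..<N}. F ((real k - real l)^2))"
    unfolding dec by (rule sum.union_disjoint) auto
  then show ?thesis using A B A' B' by linarith
qed

lemma sin_lin_lower:
  fixes u t :: real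
  assumes "0 \<le> u" "u \<le> t" "t \<le> 1"
  shows "u * (1 - t) \<le> sin u"
proof -
  have "\<bar>sin u - (\<Sum>m<3. sin_coeff m * u ^ m)\<bar> \<le> inverse (fact 3) * \<bar>u\<bar> ^ 3"
    by (rule Maclaurin_sin_bound)
  moreover have "(\<Sum>m<3. sin_coeff m * u ^ m) = u"
    by (simp add: sin_coeff_def eval_nat_numeral)
  moreover have "inverse (fact 3) * \<bar>u\<bar> ^ 3 = u^3/(6::real)"
  proof -
    have f: "fact 3 = (6::real)" by (simp add: numeral_3_eq_3)
    have "\<bar>u\<bar> = u" using assms by simp
    then show ?thesis unfolding f by simp
  qed
  ultimately have "\<bar>sin u - u\<bar> \<le> u^3/6" by simp
  hence "u - u^3/6 \<le> sin u" by (simp only: abs_le_iff) linarith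
  moreover have "u^3/6 \<le> u * t"
  proof -
    have "u*u \<le> t*1" using assms by (intro mult_mono) auto
    have "u^3 = u * (u*u)" by (simp add: power3_eq_cube)
    also have "\<dots> \<le> u * t" using \<open>u*u \<le> t*1\<close> assms by (intro mult_left_mono) auto
    finally have "u^3/6 \<le> u*t/6" by simp
    also have "\<dots> \<le> u * t" using assms by simp
    finally show ?thesis .
  qed
  ultimately show ?thesis by (simp add: algebra_simps)
qed

lemma beta_bound:
  fixes d h \<tau> :: real and K :: nat
  assumes K1: "K \<ge> 1" and h0: "h > 0" and d0: "d \<noteq> 0" and dt: "pi * \<bar>d\<bar> * h \<le> \<tau>"
    and t0: "0 < \<tau>" and t1: "\<tau> < 1"
  shows "(cmod (\<Sum>a<K. cis (2*pi*real a*(-d*h))) / real K)^2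
           \<le> min 1 ((1/(real K * pi * h * (1-\<tau>)))^2 / d^2)"
proof -
  define S where "S = cmod (\<Sum>a<K. cis (2*pi*real a*(-d*h)))"
  have S0: "S \<ge> 0" unfolding S_def by simp
  have SK: "S \<le> real K"
  proof -
    have "S \<le> (\<Sum>a<K. cmod (cis (2*pi*real a*(-d*h))))" unfolding S_def by (rule norm_sum)
    also have "\<dots> = real K" by simp
    finally show ?thesis .
  qed
  define u where "u = pi * \<bar>d\<bar> * h"
  have u0: "u > 0" unfolding u_def using d0 h0 by simp
  have su: "u * (1 - \<tau>) \<le> sin u"
    by (rule sin_lin_lower) (use u0 dt t1 in \<open>auto simp: u_def\<close>)
  have supos: "sin u > 0" using su u0 t1 by (smt (verit) mult_pos_pos)
  have sabs: "\<bar>sin (pi * (-d*h))\<bar> = sin u"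
  proof (cases "d \<ge> 0")
    case True
    then have "pi * (-d*h) = - u" unfolding u_def by simp
    then show ?thesis using supos by simp
  next
    case False
    then have "pi * (-d*h) = u" unfolding u_def by simp
    then show ?thesis using supos by simp
  qed
  have "S \<le> 1 / \<bar>sin (pi * (-d*h))\<bar>"
    unfolding S_def by (rule cis_sum_bound) (use sabs supos in simp)
  also have "\<dots> = 1 / sin u" using sabs by simp
  also have "\<dots> \<le> 1 / (u * (1 - \<tau>))"
    by (rule divide_left_mono) (use su u0 t1 supos in \<open>auto intro!: mult_pos_pos\<close>)
  finally have S1: "S \<le> 1 / (u * (1 - \<tau>))" .
  have Kp: "real K > 0" using K1 by simp
  have A: "(S / real K)^2 \<le> 1"
    using SK S0 Kp by (simp add: power_le_one)
  have "S / real K \<le> 1 / (u * (1 - \<tau>)) / real K"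
    using S1 Kp by (intro divide_right_mono) auto
  also have "\<dots> = (1/(real K * pi * h * (1-\<tau>))) / \<bar>d\<bar>"
    unfolding u_def by (simp add: field_simps)
  finally have B0: "S / real K \<le> (1/(real K * pi * h * (1-\<tau>))) / \<bar>d\<bar>" .
  have "(S / real K)^2 \<le> ((1/(real K * pi * h * (1-\<tau>))) / \<bar>d\<bar>)^2"
    by (rule power_mono[OF B0]) (use S0 Kp in simp)
  also have "\<dots> = (1/(real K * pi * h * (1-\<tau>)))^2 / d^2"
    by (simp add: power_divide power_mult_distrib)
  finally show ?thesis using A unfolding S_def by simp
qed

lemma sq_expand:
  "complex_of_real ((cmod (\<Sum>k<N. cis (2*pi*real k*y)))^2)
     = (\<Sum>k<N. \<Sum>l<N. cis (2*pi*(real k - real l)*y))"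
proof -
  have "complex_of_real ((cmod (\<Sum>k<N. cis (2*pi*real k*y)))^2)
        = (\<Sum>k<N. cis (2*pi*real k*y)) * (\<Sum>l<N. cis (-(2*pi*real l*y)))"
    by (simp only: complex_norm_square) (simp add: cnj_sum cis_cnj)
  also have "\<dots> = (\<Sum>k<N. \<Sum>l<N. cis (2*pi*real k*y) * cis (-(2*pi*real l*y)))"
    by (rule sum_product)
  also have "\<dots> = (\<Sum>k<N. \<Sum>l<N. cis (2*pi*(real k - real l)*y))"
    by (intro sum.cong refl) (simp add: cis_mult algebra_simps)
  finally show ?thesis .
qed

lemma cis_shift: "cis (2*pi*d*(x - m - t)) = cis (2*pi*d*x) * cis (-(2*pi*d*(m+t)))"
  by (simp add: cis_mult algebra_simps)

lemma cis_factor: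
  "(\<Sum>a<K. \<Sum>b<K. cis (-(2*pi*d*(m + real (a+b)*h))))
     = cis (-(2*pi*d*m)) * (\<Sum>a<K. cis (2*pi*real a*(-d*h)))^2"
proof -
  have "(\<Sum>a<K. \<Sum>b<K. cis (-(2*pi*d*(m + real (a+b)*h))))
     = (\<Sum>a<K. \<Sum>b<K. cis (-(2*pi*d*m)) * (cis (2*pi*real a*(-d*h)) * cis (2*pi*real b*(-d*h))))"
    by (intro sum.cong refl) (simp add: cis_mult algebra_simps)
  also have "\<dots> = cis (-(2*pi*d*m)) * (\<Sum>a<K. \<Sum>b<K. cis (2*pi*real a*(-d*h)) * cis (2*pi*real b*(-d*h)))"
    by (simp only: sum_distrib_left)
  also have "\<dots> = cis (-(2*pi*d*m)) * ((\<Sum>a<K. cis (2*pi*real a*(-d*h))) * (\<Sum>b<K. cis (2*pi*real b*(-d*h))))"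
    by (simp only: sum_product)
  finally show ?thesis by (simp add: power2_eq_square)
qed

lemma sum4_swap:
  "(\<Sum>a\<in>A. \<Sum>b\<in>B. \<Sum>k\<in>C. \<Sum>l\<in>D. f a b k l) = (\<Sum>k\<in>C. \<Sum>l\<in>D. \<Sum>a\<in>A. \<Sum>b\<in>B. f a b k l)"
proof -
  have "(\<Sum>a\<in>A. \<Sum>b\<in>B. \<Sum>k\<in>C. \<Sum>l\<in>D. f a b k l) = (\<Sum>a\<in>A. \<Sum>k\<in>C. \<Sum>l\<in>D. \<Sum>b\<in>B. f a b k l)"
  proof (intro sum.cong refl)
    fix a
    have "(\<Sum>b\<in>B. \<Sum>k\<in>C. \<Sum>l\<in>D. f a b k l) = (\<Sum>k\<in>C. \<Sum>b\<in>B. \<Sum>l\<in>D. f a b k l)"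
      by (rule sum.swap)
    also have "\<dots> = (\<Sum>k\<in>C. \<Sum>l\<in>D. \<Sum>b\<in>B. f a b k l)"
      by (intro sum.cong refl) (rule sum.swap)
    finally show "(\<Sum>b\<in>B. \<Sum>k\<in>C. \<Sum>l\<in>D. f a b k l) = (\<Sum>k\<in>C. \<Sum>l\<in>D. \<Sum>b\<in>B. f a b k l)" .
  qed
  also have "\<dots> = (\<Sum>k\<in>C. \<Sum>a\<in>A. \<Sum>l\<in>D. \<Sum>b\<in>B. f a b k l)"
    by (rule sum.swap)
  also have "\<dots> = (\<Sum>k\<in>C. \<Sum>l\<in>D. \<Sum>a\<in>A. \<Sum>b\<in>B. f a b k l)"
    by (intro sum.cong refl) (rule sum.swap)
  finally show ?thesis .
qed

context real_distribution
begin

lemma integrable_cis: "integrable M (\<lambda>x. cis (2*pi*c*x))"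
  unfolding cis_iexp by (rule integrable_iexp) auto

lemma integral_cis: "integral\<^sup>L M (\<lambda>x. cis (2*pi*c*x)) = fourier_measure M (- c)"
  unfolding cis_iexp fourier_char char_def by simp

lemma fourier_zero: "fourier_measure M 0 = 1"
  unfolding fourier_char by (simp add: char_zero)

lemma fourier_norm: "cmod (fourier_measure M c) \<le> 1"
  unfolding fourier_char by (rule cmod_char_le_1)

lemma fourier_neg: "fourier_measure M (- c) = cnj (fourier_measure M c)"
proof -
  have "fourier_measure M c = integral\<^sup>L M (\<lambda>x. cis (2*pi*(-c)*x))"
    using integral_cis[of "-c"] by simp
  also have "\<dots> = integral\<^sup>L M (\<lambda>x. cnj (cis (2*pi*c*x)))"
    by (simp add: cis_cnj)
  also have "\<dots> = cnj (fourier_measure M (-c))"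
    by (simp only: Bochner_Integration.integral_cnj integral_cis)
  finally show ?thesis by simp
qed


lemma core:
  fixes \<epsilon> \<delta> m \<tau> :: real and N K :: nat
  assumes conc: "measure M {\<epsilon>..1} = 1"
    and dl: "\<And>j::nat. j \<ge> 1 \<Longrightarrow> cmod (fourier_measure M (real j)) \<le> \<delta>"
    and N1: "N \<ge> 1" and K1: "K \<ge> 1" and m0: "0 < m" and m2: "2*m < \<epsilon>" and e1: "\<epsilon> \<le> 1"
    and t0: "0 < \<tau>" and t1: "\<tau> < 1"
    and hb: "pi * real N * ((\<epsilon> - 2*m)/(2*real K)) \<le> \<tau>"
  shows "1 - 1/(real N * (sin (pi*m))^2) \<le> \<delta> * (2*(2*(2/(pi*(\<epsilon>-2*m)*(1-\<tau>))) + 1))"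
proof -
  define h where "h = (\<epsilon> - 2*m)/(2*real K)"
  define s where "s = 2/(pi*(\<epsilon>-2*m)*(1-\<tau>))"
  define c0 where "c0 = 1/(real N * (real K)^2)"
  define Dn where "Dn y = (\<Sum>k<N. cis(2*pi*real k*y))" for y
  define gr where "gr x = c0 * (\<Sum>a<K. \<Sum>b<K. (cmod (Dn (x - m - real (a+b)*h)))^2)" for x
  define C where "C k l = complex_of_real c0 * (\<Sum>a<K. \<Sum>b<K. cis(-(2*pi*(real k - real l)*(m + real(a+b)*h))))" for k l :: nat
  define g where "g x = (\<Sum>k<N. \<Sum>l<N. C k l * cis(2*pi*(real k - real l)*x))" for x
  define \<eta> where "\<eta> = 1/(real N * (sin (pi*m))^2)"
  have Kp: "real K > 0" using K1 by simp
  have Np: "real N > 0" using N1 by simp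
  have h0: "h > 0" unfolding h_def using m2 Kp by simp
  have Kh: "real K * pi * h * (1-\<tau>) = pi*(\<epsilon>-2*m)*(1-\<tau>)/2" unfolding h_def using Kp by simp
  have sK: "s = 1/(real K * pi * h * (1-\<tau>))" unfolding s_def Kh by simp
  have s0: "s > 0" unfolding s_def using m2 t1 by simp
  have del0: "\<delta> \<ge> 0" using dl[of 1] norm_ge_zero[of "fourier_measure M (real 1)"] by linarith

  have g_eq: "g x = complex_of_real (gr x)" for x
  proof -
    have "complex_of_real (gr x) = complex_of_real c0 * (\<Sum>a<K. \<Sum>b<K. \<Sum>k<N. \<Sum>l<N. cis(2*pi*(real k - real l)*(x - m - real(a+b)*h)))"
      unfolding gr_def Dn_def by (simp only: of_real_mult of_real_sum sq_expand)
    also have "\<dots> = complex_of_real c0 * (\<Sum>a<K. \<Sum>b<K. \<Sum>k<N. \<Sum>l<N. cis(2*pi*(real k - real l)*x) * cis(-(2*pi*(real k - real l)*(m + real(a+b)*h))))"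
      by (simp only: cis_shift)
    also have "\<dots> = complex_of_real c0 * (\<Sum>k<N. \<Sum>l<N. \<Sum>a<K. \<Sum>b<K. cis(2*pi*(real k - real l)*x) * cis(-(2*pi*(real k - real l)*(m + real(a+b)*h))))"
      by (simp only: sum4_swap[of _ "{..<K}" "{..<K}" "{..<N}" "{..<N}"])
    also have "\<dots> = g x" unfolding g_def C_def by (simp add: sum_distrib_left sum_distrib_right mult_ac)
    finally show ?thesis by simp
  qed

  have int_each: "integrable M (\<lambda>x. C k l * cis(2*pi*(real k - real l)*x))" for k l
    by (intro integrable_mult_right integrable_cis)
  have int_g: "integrable M g" unfolding g_def by (intro Bochner_Integration.integrable_sum int_each)
  have int_eq: "integral\<^sup>L M g = (\<Sum>k<N. \<Sum>l<N. C k l * fourier_measure M (real l - real k))"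
  proof -
    have "integral\<^sup>L M g = (\<Sum>k<N. integral\<^sup>L M (\<lambda>x. \<Sum>l<N. C k l * cis(2*pi*(real k - real l)*x)))"
      unfolding g_def by (rule Bochner_Integration.integral_sum) (intro Bochner_Integration.integrable_sum int_each)
    also have "\<dots> = (\<Sum>k<N. \<Sum>l<N. integral\<^sup>L M (\<lambda>x. C k l * cis(2*pi*(real k - real l)*x)))"
      by (intro sum.cong refl Bochner_Integration.integral_sum int_each)
    also have "\<dots> = (\<Sum>k<N. \<Sum>l<N. C k l * fourier_measure M (real l - real k))"
      by (intro sum.cong refl) (simp add: integral_cis)
    finally show ?thesis .
  qed

  have gr_int: "integrable M gr"
  proof -
    have "integrable M (\<lambda>x. Re (g x))" using int_g by simp
    then show ?thesis by (simp add: g_eq)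
  qed
  have Re_int: "Re (integral\<^sup>L M g) = integral\<^sup>L M gr"
  proof -
    have "g = (\<lambda>x. complex_of_real (gr x))" by (rule ext, rule g_eq)
    then have "integral\<^sup>L M g = integral\<^sup>L M (\<lambda>x. complex_of_real (gr x))" by simp
    then show ?thesis by simp
  qed
  have AEx: "AE x in M. x \<in> {\<epsilon>..1}" by (rule AE_prob_1) (use conc in simp)
  have sinm: "sin (pi*m) > 0" using m0 m2 e1 by (intro sin_gt_zero) auto
  have gr_le: "gr x \<le> \<eta>" if x: "x \<in> {\<epsilon>..1}" for x
  proof -
    have trm: "(cmod (Dn (x - m - real (a+b)*h)))^2 \<le> 1/(sin (pi*m))^2" if ab: "a < K" "b < K" for a b
    proof -
      define y where "y = x - m - real (a+b)*h"
      have "real (a+b) \<le> 2 * real K" using ab by simp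
      have abh: "real (a+b) * h \<le> \<epsilon> - 2*m"
      proof -
        have "real (a+b) * h \<le> (2 * real K) * h" using ab h0 by (intro mult_right_mono) auto
        also have "\<dots> = \<epsilon> - 2*m" unfolding h_def using Kp by simp
        finally show ?thesis .
      qed
      have abh0: "real (a+b) * h \<ge> 0" using h0 by simp
      have y1: "m \<le> y" "y \<le> 1 - m" unfolding y_def using x abh abh0 by auto
      have sy: "sin (pi*m) \<le> sin (pi*y)" by (rule sin_pi_lower) (use m0 m2 e1 y1 in auto)
      have "cmod (Dn y) \<le> 1 / \<bar>sin (pi*y)\<bar>" unfolding Dn_def
        by (rule cis_sum_bound) (use sy sinm in auto)
      also have "\<dots> = 1 / sin (pi*y)" using sy sinm by simp
      also have "\<dots> \<le> 1 / sin (pi*m)" by (rule divide_left_mono) (use sy sinm in auto)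
      finally have "cmod (Dn y) \<le> 1 / sin (pi*m)" .
      then have "(cmod (Dn y))^2 \<le> (1 / sin (pi*m))^2" by (intro power_mono) auto
      then show ?thesis unfolding y_def by (simp add: power_divide)
    qed
    have "(\<Sum>a<K. \<Sum>b<K. (cmod (Dn (x - m - real (a+b)*h)))^2) \<le> (\<Sum>a<K. \<Sum>b<K. 1/(sin (pi*m))^2)"
      by (intro sum_mono trm) auto
    also have "\<dots> = (real K)^2 / (sin (pi*m))^2" by (simp add: power2_eq_square)
    finally have "gr x \<le> c0 * ((real K)^2 / (sin (pi*m))^2)"
      unfolding gr_def c0_def using Np by (intro mult_left_mono) auto
    also have "\<dots> = \<eta>" unfolding c0_def \<eta>_def using Kp by (simp add: field_simps)
    finally show ?thesis .
  qed
  have int_le: "integral\<^sup>L M gr \<le> \<eta>"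
  proof -
    have "integral\<^sup>L M gr \<le> integral\<^sup>L M (\<lambda>_. \<eta>)"
      by (rule integral_mono_AE[OF gr_int]) (use AEx gr_le in \<open>auto elim: AE_mp\<close>)
    then show ?thesis using prob_space by simp
  qed

  define T where "T k l = C k l * fourier_measure M (real l - real k)" for k l
  have diag: "T k k = complex_of_real (1/real N)" for k
    unfolding T_def C_def c0_def using Kp by (simp add: fourier_zero power2_eq_square)
  have split: "(\<Sum>k<N. \<Sum>l<N. T k l) = (\<Sum>k<N. T k k) + (\<Sum>k<N. \<Sum>l\<in>{..<N}-{k}. T k l)"
  proof -
    have "(\<Sum>l<N. T k l) = T k k + (\<Sum>l\<in>{..<N}-{k}. T k l)" if "k \<in> {..<N}" for k
      using that by (simp add: sum.remove)
    then have "(\<Sum>k<N. \<Sum>l<N. T k l) = (\<Sum>k<N. T k k + (\<Sum>l\<in>{..<N}-{k}. T k l))"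
      by (intro sum.cong refl) auto
    then show ?thesis by (simp add: sum.distrib)
  qed
  have diag_sum: "(\<Sum>k<N. T k k) = 1" using Np by (simp add: diag)
  define R where "R = (\<Sum>k<N. \<Sum>l\<in>{..<N}-{k}. T k l)"
  have intg: "integral\<^sup>L M g = 1 + R"
    using int_eq split diag_sum unfolding T_def R_def by simp
  have Tb: "cmod (T k l) \<le> \<delta> * ((1/real N) * min 1 (s^2/(real k - real l)^2))"
    if kl: "k<N" "l<N" "k\<noteq>l" for k l
  proof -
    have F: "cmod (fourier_measure M (real l - real k)) \<le> \<delta>"
    proof (cases "k < l")
      case True
      then have "real l - real k = real (l-k)" by (simp add: of_nat_diff)
      then show ?thesis using dl[of "l-k"] True by simp
    next
      case False
      have e: "real l - real k = - (real k - real l)" by simp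
      have "cmod (fourier_measure M (real l - real k)) = cmod (fourier_measure M (real k - real l))"
        unfolding e fourier_neg by simp
      moreover have "real (k-l) = real k - real l" using False by (simp add: of_nat_diff)
      ultimately show ?thesis using dl[of "k-l"] False kl by simp
    qed
    define d where "d = real k - real l"
    define S where "S = (\<Sum>a<K. cis (2*pi*real a*(-d*h)))"
    have d0: "d \<noteq> 0" unfolding d_def using kl by simp
    have dN: "\<bar>d\<bar> \<le> real N" unfolding d_def using kl by auto
    have dt: "pi * \<bar>d\<bar> * h \<le> \<tau>"
    proof -
      have "pi * \<bar>d\<bar> * h \<le> pi * real N * h" using dN h0 by (intro mult_right_mono mult_left_mono) auto
      then show ?thesis using hb unfolding h_def by simp
    qed
    have bb: "(cmod S / real K)^2 \<le> min 1 (s^2 / d^2)"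
      unfolding S_def sK by (rule beta_bound[OF K1 h0 d0 dt t0 t1])
    have "C k l = complex_of_real c0 * (cis (-(2*pi*d*m)) * S^2)"
      unfolding C_def d_def S_def by (simp only: cis_factor)
    moreover have c0p: "c0 \<ge> 0" unfolding c0_def by simp
    ultimately have "cmod (C k l) = c0 * (cmod S)^2"
      by (simp add: norm_mult norm_power)
    also have "\<dots> = (1/real N) * (cmod S / real K)^2"
      unfolding c0_def using Kp by (simp add: power_divide)
    also have "\<dots> \<le> (1/real N) * min 1 (s^2 / d^2)"
      by (rule mult_left_mono[OF bb]) (use Np in simp)
    finally have Cb: "cmod (C k l) \<le> (1/real N) * min 1 (s^2 / d^2)" .
    have "cmod (T k l) = cmod (C k l) * cmod (fourier_measure M (real l - real k))"
      unfolding T_def by (simp add: norm_mult)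
    also have "\<dots> \<le> ((1/real N) * min 1 (s^2 / d^2)) * \<delta>"
      using Cb F by (intro mult_mono) auto
    finally show ?thesis unfolding d_def by (simp add: mult_ac)
  qed
  have Rb: "cmod R \<le> \<delta> * (2*(2 * s + 1))"
  proof -
    have "cmod R \<le> (\<Sum>k<N. cmod (\<Sum>l\<in>{..<N}-{k}. T k l))" unfolding R_def by (rule norm_sum)
    also have "\<dots> \<le> (\<Sum>k<N. \<Sum>l\<in>{..<N}-{k}. cmod (T k l))"
      by (intro sum_mono norm_sum)
    also have "\<dots> \<le> (\<Sum>k<N. \<Sum>l\<in>{..<N}-{k}. \<delta> * ((1/real N) * min 1 (s^2/(real k - real l)^2)))"
      by (intro sum_mono Tb) auto
    also have "\<dots> = (\<Sum>k<N. (\<delta> / real N) * (\<Sum>l\<in>{..<N}-{k}. min 1 (s^2/(real k - real l)^2)))"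
      by (simp add: sum_distrib_left)
    also have "\<dots> \<le> (\<Sum>k<N. (\<delta> / real N) * (2 * (\<Sum>j\<in>{1..N}. min 1 (s^2/(real j)^2))))"
    proof (intro sum_mono mult_left_mono)
      fix k assume "k \<in> {..<N}"
      then show "(\<Sum>l\<in>{..<N}-{k}. min 1 (s^2/(real k - real l)^2)) \<le> 2 * (\<Sum>j\<in>{1..N}. min 1 (s^2/(real j)^2))"
        using pair_sum[where F="\<lambda>t. min 1 (s^2/t)" and k=k and N=N] by simp
    qed (use del0 Np in auto)
    also have "\<dots> \<le> (\<Sum>k<N. (\<delta> / real N) * (2 * (2 * s + 1)))"
      by (intro sum_mono mult_left_mono) (use del0 Np sum_min_bound[OF s0] in auto)
    also have "\<dots> = \<delta> * (2*(2 * s + 1))" using Np by simp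
    finally show ?thesis .
  qed
  have "1 + Re R \<le> \<eta>" using int_le Re_int intg by simp
  moreover have "- Re R \<le> cmod R" using abs_Re_le_cmod[of R] by linarith
  ultimately have "1 - \<eta> \<le> \<delta> * (2*(2 * s + 1))" using Rb by linarith
  then show ?thesis unfolding \<eta>_def s_def .
qed

end

lemma arith_final:
  fixes \<epsilon> \<sigma> \<delta> :: real
  assumes e0: "0 < \<epsilon>" and s0: "0 < \<sigma>" and s1: "\<sigma> < 1" and d0: "\<delta> \<ge> 0"
    and H: "1 - \<sigma> \<le> \<delta> * (2*(2*(2/(pi*(\<epsilon>-2*(\<sigma>*\<epsilon>/2))*(1-\<sigma>))) + 1))"
  shows "pi*\<epsilon>/(8 + 2*pi*\<epsilon>) * (1-\<sigma>)^3 \<le> \<delta>"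
proof -
  define Y where "Y = (8 + 2*pi*\<epsilon>)/(pi*\<epsilon>)"
  have Y0: "Y > 0" unfolding Y_def using e0 by (simp add: pos_add_strict)
  have q0: "(1-\<sigma>)^2 > 0" using s1 by simp
  have q1: "(1-\<sigma>)^2 \<le> 1" using s0 s1 by (simp add: power_le_one)
  have X: "2*(2*(2/(pi*(\<epsilon>-2*(\<sigma>*\<epsilon>/2))*(1-\<sigma>))) + 1) = 8/(pi*\<epsilon>)/(1-\<sigma>)^2 + 2"
    using e0 s1 by (simp add: field_simps power2_eq_square)
  have "8/(pi*\<epsilon>)/(1-\<sigma>)^2 + 2 \<le> 8/(pi*\<epsilon>)/(1-\<sigma>)^2 + 2/(1-\<sigma>)^2"
    using q0 q1 by (simp add: le_divide_eq)
  also have "\<dots> = Y / (1-\<sigma>)^2" unfolding Y_def using e0 q0 by (simp add: field_simps)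
  finally have calc: "8/(pi*\<epsilon>)/(1-\<sigma>)^2 + 2 \<le> Y / (1-\<sigma>)^2" .
  have XY: "2*(2*(2/(pi*(\<epsilon>-2*(\<sigma>*\<epsilon>/2))*(1-\<sigma>))) + 1) \<le> Y / (1-\<sigma>)^2"
    by (simp only: X) (rule calc)
  have "1 - \<sigma> \<le> \<delta> * (Y / (1-\<sigma>)^2)"
    using H XY d0 by (meson mult_left_mono order_trans)
  then have "(1-\<sigma>) * (1-\<sigma>)^2 \<le> \<delta> * Y" using q0 by (simp add: field_simps)
  then have "(1-\<sigma>)^3 \<le> \<delta> * Y" by (simp add: power2_eq_square power3_eq_cube)
  then have "(1-\<sigma>)^3 / Y \<le> \<delta>" using Y0 by (simp add: divide_le_eq mult.commute)
  moreover have "pi*\<epsilon>/(8 + 2*pi*\<epsilon>) * (1-\<sigma>)^3 = (1-\<sigma>)^3 / Y" unfolding Y_def by simp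
  ultimately show ?thesis by simp
qed

theorem lemma1:
  fixes \<epsilon> :: real
  assumes "0 < \<epsilon>" and "\<epsilon> \<le> 1"
  shows "Inf {(SUP j\<in>{1::nat..}. cmod (fourier_measure \<mu> (real j))) | \<mu>.
            prob_space \<mu> \<and> sets \<mu> = sets borel \<and> measure \<mu> {\<epsilon>..1} = 1}
           \<ge> pi * \<epsilon> / (8 + 2 * pi * \<epsilon>)
         \<and> pi * \<epsilon> / (8 + 2 * pi * \<epsilon>) \<ge> \<epsilon> / 5"
proof
  have e0: "0 < \<epsilon>" and e1: "\<epsilon> \<le> 1" using assms by auto
  define c where "c = pi * \<epsilon> / (8 + 2 * pi * \<epsilon>)"
  have key: "c \<le> (SUP j\<in>{1::nat..}. cmod (fourier_measure \<mu> (real j)))"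
    if H: "prob_space \<mu> \<and> sets \<mu> = sets borel \<and> measure \<mu> {\<epsilon>..1} = 1" for \<mu>
  proof -
    have rd: "real_distribution \<mu>"
      using H by (simp add: real_distribution_def real_distribution_axioms_def)
    interpret real_distribution \<mu> by (rule rd)
    define \<delta> where "\<delta> = (SUP j\<in>{1::nat..}. cmod (fourier_measure \<mu> (real j)))"
    have bdd: "bdd_above ((\<lambda>j. cmod (fourier_measure \<mu> (real j))) ` {1::nat..})"
      by (rule bdd_aboveI[where M=1]) (auto intro: fourier_norm)
    have dl: "cmod (fourier_measure \<mu> (real j)) \<le> \<delta>" if "j \<ge> 1" for j :: nat
      unfolding \<delta>_def by (rule cSUP_upper[OF _ bdd]) (use that in simp)
    have d0: "\<delta> \<ge> 0" using dl[of 1] norm_ge_zero[of "fourier_measure \<mu> (real 1)"] by linarith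
    show "c \<le> \<delta>"
    proof (rule field_le_mult_one_interval)
      fix z :: real assume z: "0 < z" "z < 1"
      define \<sigma> where "\<sigma> = (1 - z)/3"
      have s0: "0 < \<sigma>" and s1: "\<sigma> < 1" unfolding \<sigma>_def using z by auto
      define m where "m = \<sigma>*\<epsilon>/2"
      have m0: "0 < m" unfolding m_def using s0 e0 by simp
      have m2: "2*m < \<epsilon>" unfolding m_def using s1 e0 by simp
      have sinm: "sin (pi*m) > 0" using m0 m2 e1 by (intro sin_gt_zero) auto
      define N where "N = nat \<lceil>1/(\<sigma> * (sin (pi*m))^2)\<rceil> + 1"
      define K where "K = nat \<lceil>pi * real N / \<sigma>\<rceil> + 1"
      have N1: "N \<ge> 1" unfolding N_def by simp
      have K1: "K \<ge> 1" unfolding K_def by simp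
      have NB: "real N \<ge> 1/(\<sigma> * (sin (pi*m))^2)" unfolding N_def by linarith
      have KB: "real K \<ge> pi * real N / \<sigma>" unfolding K_def by linarith
      have Kp: "real K > 0" using K1 by simp
      have hb: "pi * real N * ((\<epsilon> - 2*m)/(2*real K)) \<le> \<sigma>"
      proof -
        have "\<epsilon> - 2*m \<le> 2" using e1 m0 by simp
        then have "(\<epsilon> - 2*m)/(2*real K) \<le> 2/(2*real K)" using Kp by (intro divide_right_mono) auto
        then have "(\<epsilon> - 2*m)/(2*real K) \<le> 1 / real K" by simp
        then have "pi * real N * ((\<epsilon> - 2*m)/(2*real K)) \<le> pi * real N * (1 / real K)"
          by (intro mult_left_mono) auto
        also have "\<dots> \<le> \<sigma>" using KB Kp s0 by (simp add: field_simps)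
        finally show ?thesis .
      qed
      have C: "1 - 1/(real N * (sin (pi*m))^2) \<le> \<delta> * (2*(2*(2/(pi*(\<epsilon>-2*m)*(1-\<sigma>))) + 1))"
        by (rule core[OF _ dl N1 K1 m0 m2 e1 s0 s1 hb]) (use H in simp)
      have etab: "1/(real N * (sin (pi*m))^2) \<le> \<sigma>"
      proof -
        have p: "\<sigma> * (sin (pi*m))^2 > 0" using s0 sinm by simp
        have "1 \<le> \<sigma> * (real N * (sin (pi*m))^2)" using NB p by (simp add: field_simps)
        moreover have q: "0 < real N * (sin (pi*m))^2" using N1 sinm by simp
        ultimately show ?thesis by (simp add: pos_divide_le_eq[OF q] mult.commute)
      qed
      have "1 - \<sigma> \<le> \<delta> * (2*(2*(2/(pi*(\<epsilon>-2*(\<sigma>*\<epsilon>/2))*(1-\<sigma>))) + 1))"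
        using C etab unfolding m_def by linarith
      then have "c * (1-\<sigma>)^3 \<le> \<delta>" unfolding c_def by (rule arith_final[OF e0 s0 s1 d0])
      moreover have "z \<le> (1-\<sigma>)^3"
      proof -
        have "1 - 3*\<sigma> \<le> (1-\<sigma>)^3" using s0 s1
          by (simp add: power3_eq_cube algebra_simps)
        moreover have "1 - 3*\<sigma> = z" unfolding \<sigma>_def by (simp add: field_simps)
        ultimately show ?thesis by linarith
      qed
      moreover have "c \<ge> 0" unfolding c_def using e0 by simp
      ultimately show "z * c \<le> \<delta>"
        using mult_right_mono[of z "(1-\<sigma>)^3" c] by (simp add: mult.commute)
    qed
  qed
  have ne: "{(SUP j\<in>{1::nat..}. cmod (fourier_measure \<mu> (real j))) | \<mu>.
            prob_space \<mu> \<and> sets \<mu> = sets borel \<and> measure \<mu> {\<epsilon>..1} = 1} \<noteq> {}"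
  proof -
    have "prob_space (return borel (1::real)) \<and> sets (return borel (1::real)) = sets borel
          \<and> measure (return borel (1::real)) {\<epsilon>..1} = 1"
      using e1 by (simp add: prob_space_return measure_return)
    then show ?thesis by blast
  qed
  show "Inf {(SUP j\<in>{1::nat..}. cmod (fourier_measure \<mu> (real j))) | \<mu>.
            prob_space \<mu> \<and> sets \<mu> = sets borel \<and> measure \<mu> {\<epsilon>..1} = 1}
           \<ge> pi * \<epsilon> / (8 + 2 * pi * \<epsilon>)"
    unfolding c_def[symmetric] by (rule cInf_greatest[OF ne]) (use key in blast)
  show "pi * \<epsilon> / (8 + 2 * pi * \<epsilon>) \<ge> \<epsilon> / 5"
  proof -
    have "2 * pi * \<epsilon> \<le> 2 * pi * 1" using e1 pi_gt_zero by (intro mult_left_mono) auto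
    then have "8 + 2 * pi * \<epsilon> \<le> 5 * pi" using pi_gt3 by linarith
    then have "\<epsilon> * (8 + 2 * pi * \<epsilon>) \<le> \<epsilon> * (5 * pi)" using e0 by (intro mult_left_mono) auto
    then show ?thesis using e0 pi_gt_zero by (simp add: field_simps add_pos_pos)
  qed
qed

end
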